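(* Let $\nu>-1$ be real. Then every zero $a\in\mathbb C\setminus\{0\}$ of $x\mapsto J_\nu(x;q^2)$ is real.
   Context: Fix $0<q<1$. For $a\in\mathbb C$ put $(a;q)_0=1$, $(a;q)_k=\prod_{i=0}^{k-1}(1-aq^i)$, $(a;q)_\infty=\prod_{i\ge0}(1-aq^i)$. For $\nu\in\mathbb C$ and $x\in\mathbb C\setminus\{0\}$ the Hahn–Exton $q$-Bessel function is $$J_\nu(x;q^2)=\frac{x^\nu}{(q^2;q^2)_\infty}\sum_{k=0}^\infty\frac{(-1)^kq^{k(k+1)}(q^{2\nu+2k+2};q^2)_\infty}{(q^2;q^2)_k}\,x^{2k},$$ with $x^\nu=\exp(\nu\operatorname{Log}x)$ (principal branch). Thus the zeros of $J_\nu(\cdot;q^2)$ in $\mathbb C\setminus\{0\}$ are the nonzero zeros of the entire function $x^{-\nu}J_\nu(x;q^2)$. *)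

theory Defs
  imports "HOL-Analysis.Analysis"
begin

definition qpoch :: "complex \<Rightarrow> complex \<Rightarrow> nat \<Rightarrow> complex" where
  "qpoch a p k = (\<Prod>i<k. 1 - a * p ^ i)"

definition qpoch_inf :: "complex \<Rightarrow> complex \<Rightarrow> complex" where
  "qpoch_inf a p = (\<Prod>i. 1 - a * p ^ i)"

text \<open>Hahn--Exton q-Bessel function J_nu(x; q^2), with x^nu on the principal branch
  (complex powr: x powr nu = exp (nu * Ln x) for x nonzero).\<close>
definition hahn_exton_J :: "real \<Rightarrow> complex \<Rightarrow> complex \<Rightarrow> complex" where
  "hahn_exton_J q \<nu> x =
     x powr \<nu> / qpoch_inf (of_real (q\<^sup>2)) (of_real (q\<^sup>2)) *
     (\<Sum>k. (-1) ^ k * of_real (q ^ (k * (k + 1)))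
            * qpoch_inf (of_real q powr (2 * \<nu> + 2 * of_nat k + 2)) (of_real (q\<^sup>2))
            / qpoch (of_real (q\<^sup>2)) (of_real (q\<^sup>2)) k
            * x ^ (2 * k))"

end

theory Submission
  imports Defs
begin

lemma qinf_conv:
  fixes x :: complex and Q :: real
  assumes "0 < Q" "Q < 1"
  shows "convergent_prod (\<lambda>i. 1 - x * of_real Q ^ i)"
proof -
  have "summable (\<lambda>i. norm x * Q ^ i)"
    using assms by (intro summable_mult summable_geometric) auto
  hence "summable (\<lambda>i. norm ((1 - x * of_real Q ^ i) - 1))"
    using assms by (simp add: norm_mult norm_power)
  thus ?thesis
    by (intro abs_convergent_prod_imp_convergent_prod summable_imp_abs_convergent_prod)
qed

lemma qinf_factor_nz:
  fixes x :: complex and Q :: real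
  assumes "0 < Q" "Q < 1" "norm x < 1"
  shows "1 - x * of_real Q ^ i \<noteq> 0"
proof
  assume "1 - x * of_real Q ^ i = 0"
  hence "norm (x * of_real Q ^ i) = 1" by (metis eq_iff_diff_eq_0 norm_one)
  moreover have "norm (x * of_real Q ^ i) < 1"
  proof -
    have "norm (x * of_real Q ^ i) = norm x * Q ^ i" using assms by (simp add: norm_mult norm_power)
    also have "\<dots> \<le> norm x" using assms by (simp add: mult_left_le power_le_one)
    finally show ?thesis using assms by simp
  qed
  ultimately show False by simp
qed

lemma qinf_nz:
  fixes x :: complex and Q :: real
  assumes "0 < Q" "Q < 1" "norm x < 1"
  shows "qpoch_inf x (of_real Q) \<noteq> 0"
  unfolding qpoch_inf_def
  using qinf_conv[OF assms(1,2)] qinf_factor_nz[OF assms]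
  by (intro prodinf_nonzero) auto

lemma qinf_shift:
  fixes x :: complex and Q :: real
  assumes "0 < Q" "Q < 1" "norm x < 1"
  shows "qpoch_inf x (of_real Q) = (1 - x) * qpoch_inf (x * of_real Q) (of_real Q)"
proof -
  have "(\<Prod>n. 1 - x * of_real Q ^ Suc n) = qpoch_inf x (of_real Q) / (1 - x)"
    unfolding qpoch_inf_def
    using prodinf_split_head[OF qinf_conv[OF assms(1,2)], of x] qinf_factor_nz[OF assms, of 0]
    by simp
  moreover have "(\<Prod>n. 1 - x * of_real Q ^ Suc n) = qpoch_inf (x * of_real Q) (of_real Q)"
    unfolding qpoch_inf_def by (simp add: mult.assoc mult.commute)
  moreover have "1 - x \<noteq> 0" using qinf_factor_nz[OF assms, of 0] by simp
  ultimately show ?thesis by (simp add: field_simps)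
qed

lemma qinf_real:
  fixes x :: real and Q :: real
  assumes "0 < Q" "Q < 1"
  shows "qpoch_inf (of_real x) (of_real Q) \<in> \<real>"
proof -
  have "(\<lambda>n. \<Prod>i\<le>n. 1 - of_real x * (of_real Q :: complex) ^ i) \<longlonglongrightarrow> qpoch_inf (of_real x) (of_real Q)"
    unfolding qpoch_inf_def by (rule convergent_prod_LIMSEQ[OF qinf_conv[OF assms]])
  moreover have "\<forall>n. (\<Prod>i\<le>n. 1 - of_real x * (of_real Q :: complex) ^ i) \<in> \<real>"
    by auto
  ultimately show ?thesis
    by (intro Lim_in_closed_set[OF closed_complex_Reals]) auto
qed

locale qrec =
  fixes Q w :: real and c :: "nat \<Rightarrow> complex"
  assumes Q0: "0 < Q" and Q1: "Q < 1" and w0: "0 < w" and wQ: "w * Q < 1"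
    and c0R: "c 0 \<in> \<real>" and c0nz: "c 0 \<noteq> 0"
    and rec: "\<And>k. c (Suc k) * (1 - of_real (Q ^ Suc k)) * (1 - of_real (w * Q ^ Suc k))
                 = - of_real (Q ^ Suc k) * c k"
begin

definition d :: "nat \<Rightarrow> real" where "d k = (1 - Q ^ Suc k) * (1 - w * Q ^ Suc k)"
definition \<delta> :: real where "\<delta> = (1 - Q) * (1 - w * Q)"

lemma QSuc_le: "Q ^ Suc k \<le> Q"
  using Q0 Q1 by (simp add: mult_left_le power_le_one)

lemma delta_pos: "0 < \<delta>" unfolding \<delta>_def using Q1 wQ by simp

lemma d_ge: "\<delta> \<le> d k"
  unfolding d_def \<delta>_def
proof (rule mult_mono)
  show "1 - Q \<le> 1 - Q ^ Suc k" using QSuc_le by simp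
  have "w * Q ^ Suc k \<le> w * Q" using QSuc_le w0 by simp
  thus "1 - w * Q \<le> 1 - w * Q ^ Suc k" by simp
  have "Q ^ Suc k < 1" using QSuc_le[of k] Q1 by linarith
  thus "0 \<le> 1 - Q ^ Suc k" by simp
  show "0 \<le> 1 - w * Q" using wQ by simp
qed

lemma d_pos: "0 < d k" using d_ge delta_pos by (meson less_le_trans)

lemma c_Suc: "c (Suc k) = - of_real (Q ^ Suc k / d k) * c k"
proof -
  have "of_real (d k) \<noteq> (0::complex)" using d_pos[of k] by simp
  moreover have "c (Suc k) * of_real (d k) = - of_real (Q ^ Suc k) * c k"
    using rec[of k] unfolding d_def by (simp add: mult.assoc)
  ultimately show ?thesis by (simp add: field_simps)
qed

lemma c_real: "c k \<in> \<real>"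
  by (induction k) (auto simp: c0R c_Suc)

lemma cnj_c: "cnj (c k) = c k" using c_real Reals_cnj_iff by blast

lemma norm_c_Suc: "norm (c (Suc k)) \<le> Q ^ Suc k / \<delta> * norm (c k)"
proof -
  have "norm (c (Suc k)) = Q ^ Suc k / d k * norm (c k)"
    using d_pos[of k] Q0 by (simp only: c_Suc norm_mult norm_minus_cancel norm_of_real) simp
  also have "\<dots> \<le> Q ^ Suc k / \<delta> * norm (c k)"
    using d_ge[of k] delta_pos Q0 by (intro mult_right_mono divide_left_mono) auto
  finally show ?thesis .
qed

lemma summable_norm_c: assumes "0 \<le> r" shows "summable (\<lambda>k. norm (c k) * r ^ k)"
proof -
  have "(\<lambda>n. Q ^ n * (Q * r / \<delta>)) \<longlonglongrightarrow> 0 * (Q * r / \<delta>)"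
    using Q0 Q1 by (intro tendsto_mult LIMSEQ_power_zero) auto
  hence "eventually (\<lambda>n. Q ^ n * (Q * r / \<delta>) < 1/2) sequentially"
    by (intro order_tendstoD) auto
  then obtain N where N: "\<And>n. n \<ge> N \<Longrightarrow> Q ^ n * (Q * r / \<delta>) < 1/2"
    by (auto simp: eventually_sequentially)
  show ?thesis
  proof (rule summable_ratio_test[of "1/2" N])
    fix n assume "n \<ge> N"
    have "norm (norm (c (Suc n)) * r ^ Suc n) = norm (c (Suc n)) * r ^ Suc n"
      using assms by simp
    also have "\<dots> \<le> (Q ^ Suc n / \<delta> * norm (c n)) * r ^ Suc n"
      using assms norm_c_Suc by (intro mult_right_mono) auto
    also have "\<dots> = (Q ^ n * (Q * r / \<delta>)) * (norm (c n) * r ^ n)" by (simp add: field_simps)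
    also have "\<dots> \<le> 1/2 * (norm (c n) * r ^ n)"
      using N[OF \<open>n \<ge> N\<close>] assms by (intro mult_right_mono) auto
    also have "\<dots> = 1/2 * norm (norm (c n) * r ^ n)" using assms by simp
    finally show "norm (norm (c (Suc n)) * r ^ Suc n) \<le> 1/2 * norm (norm (c n) * r ^ n)" .
  qed simp
qed

lemma summable_c: "summable (\<lambda>k. c k * z ^ k)"
proof (rule summable_norm_cancel)
  show "summable (\<lambda>k. norm (c k * z ^ k))"
    using summable_norm_c[of "norm z"] by (simp add: norm_mult norm_power)
qed

definition f :: "complex \<Rightarrow> complex" where "f z = (\<Sum>k. c k * z ^ k)"

lemma f_sums: "(\<lambda>k. c k * z ^ k) sums f z"
  unfolding f_def using summable_c by (rule summable_sums)

lemma f_cnj: "f (cnj z) = cnj (f z)"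
proof -
  have "(\<lambda>k. cnj (c k * z ^ k)) sums cnj (f z)" using sums_cnj[THEN iffD2, OF f_sums] .
  hence "(\<lambda>k. c k * cnj z ^ k) sums cnj (f z)" by (simp add: cnj_c)
  from sums_unique2[OF this f_sums[of "cnj z"]] show ?thesis by simp
qed

lemma f_rec:
  "f z - (1 + of_real w) * f (of_real Q * z) + of_real w * f (of_real Q * (of_real Q * z))
     + of_real Q * z * f (of_real Q * z) = 0"
proof -
  define Q' :: complex where "Q' = of_real Q"
  define w' :: complex where "w' = of_real w"
  define h where "h k = c k * z ^ k - (1 + w') * (c k * (Q' * z) ^ k) + w' * (c k * (Q' * (Q' * z)) ^ k)" for k
  have hs1: "h sums (f z - (1 + w') * f (Q' * z) + w' * f (Q' * (Q' * z)))"
    unfolding h_def by (intro sums_add sums_diff sums_mult f_sums)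
  have "h (Suc j) = - (Q' * z) * (c j * (Q' * z) ^ j)" for j
  proof -
    define P where "P = Q' ^ Suc j"
    define Z where "Z = z ^ Suc j"
    have e: "c (Suc j) * (1 - P) * (1 - w' * P) = - P * c j"
      using rec[of j] unfolding P_def Q'_def w'_def by simp
    have "h (Suc j) = c (Suc j) * Z - (1 + w') * (c (Suc j) * (P * Z)) + w' * (c (Suc j) * (P * P * Z))"
      unfolding h_def P_def Z_def by (simp add: power_mult_distrib)
    also have "\<dots> = (c (Suc j) * (1 - P) * (1 - w' * P)) * Z" by (simp add: algebra_simps)
    also have "\<dots> = - P * Z * c j" using e by simp
    also have "\<dots> = - (Q' * z) * (c j * (Q' * z) ^ j)"
      unfolding P_def Z_def by (simp add: power_mult_distrib algebra_simps)
    finally show ?thesis .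
  qed
  moreover have "h 0 = 0" unfolding h_def by (simp add: algebra_simps)
  moreover have "(\<lambda>j. - (Q' * z) * (c j * (Q' * z) ^ j)) sums (- (Q' * z) * f (Q' * z))"
    by (intro sums_mult f_sums)
  ultimately have "h sums (- (Q' * z) * f (Q' * z))"
    using sums_Suc_iff[of h] by simp
  hence "f z - (1 + w') * f (Q' * z) + w' * f (Q' * (Q' * z)) = - (Q' * z) * f (Q' * z)"
    using sums_unique2[OF hs1] by simp
  thus ?thesis unfolding Q'_def w'_def by (simp add: algebra_simps)
qed

end

context qrec begin

definition M :: "real \<Rightarrow> real" where "M R = (\<Sum>k. norm (c (Suc k)) * R ^ k)"

lemma f_near0:
  assumes zR: "norm z \<le> R" and R0: "0 < R"
  shows "norm (f z - c 0) \<le> norm z * M R"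
proof -
  have sR: "summable (\<lambda>k. norm (c (Suc k)) * R ^ k)"
  proof -
    have "summable (\<lambda>k. norm (c (Suc k)) * R ^ Suc k)"
      using summable_Suc_iff[of "\<lambda>k. norm (c k) * R ^ k"] summable_norm_c[of R] R0 by simp
    hence "summable (\<lambda>k. (norm (c (Suc k)) * R ^ Suc k) / R)" by (rule summable_divide)
    moreover have "(norm (c (Suc k)) * R ^ Suc k) / R = norm (c (Suc k)) * R ^ k" for k
      using R0 by simp
    ultimately show ?thesis by simp
  qed
  have cmp: "norm (c (Suc n) * z ^ n) \<le> norm (c (Suc n)) * R ^ n" for n
  proof -
    have "norm z ^ n \<le> R ^ n" using zR by (intro power_mono) auto
    hence "norm (c (Suc n)) * norm z ^ n \<le> norm (c (Suc n)) * R ^ n"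
      by (intro mult_left_mono) auto
    thus ?thesis by (simp add: norm_mult norm_power)
  qed
  have sn: "summable (\<lambda>k. norm (c (Suc k) * z ^ k))"
    by (rule summable_comparison_test'[OF sR]) (use cmp in simp)
  have s1: "summable (\<lambda>k. c (Suc k) * z ^ k)" using sn by (rule summable_norm_cancel)
  have "f z - c 0 = (\<Sum>k. c (Suc k) * z ^ Suc k)"
    unfolding f_def using suminf_split_head[OF summable_c, of z] by simp
  also have "\<dots> = (\<Sum>k. z * (c (Suc k) * z ^ k))" by (simp add: algebra_simps)
  also have "\<dots> = z * (\<Sum>k. c (Suc k) * z ^ k)" using s1 by (rule suminf_mult)
  finally have eq: "f z - c 0 = z * (\<Sum>k. c (Suc k) * z ^ k)" .
  have "norm (\<Sum>k. c (Suc k) * z ^ k) \<le> (\<Sum>k. norm (c (Suc k) * z ^ k))"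
    using sn by (rule summable_norm)
  also have "\<dots> \<le> M R"
    unfolding M_def by (rule suminf_le[OF cmp sn sR])
  finally have "norm (\<Sum>k. c (Suc k) * z ^ k) \<le> M R" .
  hence "norm z * norm (\<Sum>k. c (Suc k) * z ^ k) \<le> norm z * M R"
    by (intro mult_left_mono) auto
  thus ?thesis unfolding eq norm_mult .
qed

end

lemma alg_step:
  fixes u0 u1 u2 v0 v1 v2 w P a b :: complex
  shows "u0 - (1 + w) * u1 + w * u2 + P * a * u1 = 0 \<Longrightarrow> v0 - (1 + w) * v1 + w * v2 + P * b * v1 = 0
    \<Longrightarrow> w * (u1 * v2 - u2 * v1) = u0 * v1 - u1 * v0 + P * (a - b) * u1 * v1"
  by algebra

context qrec begin

lemma f_zero_real:
  assumes fa: "f \<alpha> = 0" shows "Im \<alpha> = 0"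
proof (rule ccontr)
  assume im: "Im \<alpha> \<noteq> 0"
  define Q' :: complex where "Q' = of_real Q"
  define w' :: complex where "w' = of_real w"
  define \<beta> where "\<beta> = cnj \<alpha>"
  define u where "u n = f (Q' ^ n * \<alpha>)" for n
  define v where "v n = f (Q' ^ n * \<beta>)" for n
  define D where "D n = u n * v (Suc n) - u (Suc n) * v n" for n
  have v_cnj: "v n = cnj (u n)" for n
    unfolding v_def u_def \<beta>_def Q'_def by (simp add: f_cnj[symmetric])
  have rgen: "f (Q' ^ n * z) - (1 + w') * f (Q' ^ Suc n * z) + w' * f (Q' ^ Suc (Suc n) * z)
      + Q' ^ Suc n * z * f (Q' ^ Suc n * z) = 0" for n z
  proof -
    have e1: "Q' * (Q' ^ n * z) = Q' ^ Suc n * z" by (simp add: mult.assoc)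
    have e2: "Q' * (Q' * (Q' ^ n * z)) = Q' ^ Suc (Suc n) * z" by (simp add: mult.assoc)
    show ?thesis using f_rec[of "Q' ^ n * z"]
      unfolding Q'_def[symmetric] w'_def[symmetric] e2 e1 by (simp only: power_Suc mult.assoc)
  qed
  have ru: "u n - (1 + w') * u (Suc n) + w' * u (Suc (Suc n)) + Q' ^ Suc n * \<alpha> * u (Suc n) = 0" for n
    using rgen[of n \<alpha>] unfolding u_def .
  have rv: "v n - (1 + w') * v (Suc n) + w' * v (Suc (Suc n)) + Q' ^ Suc n * \<beta> * v (Suc n) = 0" for n
    using rgen[of n \<beta>] unfolding v_def .
  have step: "w' * D (Suc n) = D n + Q' ^ Suc n * (\<alpha> - \<beta>) * u (Suc n) * v (Suc n)" for n
    using alg_step[OF ru[of n] rv[of n]] unfolding D_def .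
  have tele: "w' ^ N * D N = D 0 + (\<alpha> - \<beta>) * (\<Sum>n<N. Q' ^ Suc n * w' ^ n * u (Suc n) * v (Suc n))" for N
  proof (induction N)
    case 0 show ?case by simp
  next
    case (Suc N)
    have "w' ^ Suc N * D (Suc N) = w' ^ N * (w' * D (Suc N))" by simp
    also have "\<dots> = w' ^ N * D N + (\<alpha> - \<beta>) * (Q' ^ Suc N * w' ^ N * u (Suc N) * v (Suc N))"
      unfolding step by (simp add: algebra_simps)
    also have "\<dots> = D 0 + (\<alpha> - \<beta>) * (\<Sum>n<Suc N. Q' ^ Suc n * w' ^ n * u (Suc n) * v (Suc n))"
      unfolding Suc.IH by (simp add: algebra_simps)
    finally show ?case .
  qed
  have D0: "D 0 = 0" unfolding D_def using fa by (simp add: u_def v_cnj)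
  define T where "T N = (\<Sum>n<N. Q ^ Suc n * w ^ n * norm (u (Suc n)) ^ 2)" for N
  have sumT: "(\<Sum>n<N. Q' ^ Suc n * w' ^ n * u (Suc n) * v (Suc n)) = of_real (T N)" for N
  proof -
    have "Q' ^ Suc n * w' ^ n * u (Suc n) * v (Suc n) = of_real (Q ^ Suc n * w ^ n * norm (u (Suc n)) ^ 2)" for n
    proof -
      have nn: "u (Suc n) * v (Suc n) = of_real (norm (u (Suc n)) ^ 2)"
        unfolding v_cnj by (rule complex_norm_square[symmetric])
      have "Q' ^ Suc n * w' ^ n * u (Suc n) * v (Suc n) = Q' ^ Suc n * w' ^ n * (u (Suc n) * v (Suc n))"
        by (simp only: mult.assoc)
      also have "\<dots> = of_real (Q ^ Suc n * w ^ n * norm (u (Suc n)) ^ 2)"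
        by (simp only: nn Q'_def w'_def of_real_mult of_real_power)
      finally show ?thesis .
    qed
    thus ?thesis unfolding T_def by simp
  qed
  have T0: "0 \<le> T N" for N unfolding T_def using Q0 w0 by (intro sum_nonneg) auto
  have ab: "norm (\<alpha> - \<beta>) = 2 * \<bar>Im \<alpha>\<bar>"
    unfolding \<beta>_def complex_diff_cnj by (simp add: norm_mult)
  have normE: "norm (w' ^ N * D N) = 2 * \<bar>Im \<alpha>\<bar> * T N" for N
    using tele[of N] unfolding D0 sumT by (simp add: norm_mult ab T0)
  define R where "R = norm \<alpha> + 1"
  define K where "K = norm \<alpha> * M R"
  have Qn: "Q ^ n \<le> 1" for n using Q0 Q1 by (simp add: power_le_one)
  have bu: "norm (u n - c 0) \<le> K * Q ^ n" for n
  proof -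
    have nz: "norm (Q' ^ n * \<alpha>) = Q ^ n * norm \<alpha>"
      unfolding Q'_def using Q0 by (simp add: norm_mult norm_power)
    have "Q ^ n * norm \<alpha> \<le> 1 * norm \<alpha>" by (rule mult_right_mono) (use Qn in auto)
    hence nR: "norm (Q' ^ n * \<alpha>) \<le> R" unfolding nz R_def by simp
    have R0: "0 < R" unfolding R_def using norm_ge_zero[of \<alpha>] by linarith
    from f_near0[OF nR R0] have "norm (u n - c 0) \<le> Q ^ n * norm \<alpha> * M R"
      unfolding R_def u_def nz by simp
    thus ?thesis unfolding K_def by (simp add: algebra_simps)
  qed
  have K0: "0 \<le> K" using bu[of 0] norm_ge_zero[of "u 0 - c 0"] by (simp del: norm_ge_zero)
  have bv: "norm (v n - c 0) \<le> K * Q ^ n" for n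
  proof -
    have "v n - c 0 = cnj (u n - c 0)" unfolding v_cnj using cnj_c[of 0] by simp
    hence "norm (v n - c 0) = norm (u n - c 0)" by (simp only: complex_mod_cnj)
    thus ?thesis using bu[of n] by simp
  qed
  define B where "B = norm (c 0) + K"
  have bvn: "norm (v n) \<le> B" for n
  proof -
    have "norm (v n) \<le> norm (v n - c 0) + norm (c 0)" using norm_triangle_ineq[of "v n - c 0" "c 0"] by simp
    also have "\<dots> \<le> K + norm (c 0)" using bv[of n] Qn[of n] K0
      by (meson add_right_mono mult_left_le order_trans)
    finally show ?thesis unfolding B_def by simp
  qed
  define C where "C = 2 * K * (B + norm (c 0))"
  have bD: "norm (D N) \<le> C * Q ^ N" for N
  proof -
    have QS: "Q ^ Suc N \<le> Q ^ N" using Q0 Q1 by (simp add: mult_left_le_one_le)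
    have KQS: "K * Q ^ Suc N \<le> K * Q ^ N" using QS K0 by (rule mult_left_mono)
    have eq: "D N = (u N - c 0) * v (Suc N) - (u (Suc N) - c 0) * v N
                 + c 0 * ((v (Suc N) - c 0) - (v N - c 0))"
      unfolding D_def by (simp add: algebra_simps)
    have "norm (D N) \<le> norm ((u N - c 0) * v (Suc N)) + norm ((u (Suc N) - c 0) * v N)
                 + norm (c 0) * (norm (v (Suc N) - c 0) + norm (v N - c 0))"
    proof -
      have "norm (D N) \<le> norm ((u N - c 0) * v (Suc N) - (u (Suc N) - c 0) * v N)
                 + norm (c 0 * ((v (Suc N) - c 0) - (v N - c 0)))"
        unfolding eq by (rule norm_triangle_ineq)
      also have "\<dots> \<le> (norm ((u N - c 0) * v (Suc N)) + norm ((u (Suc N) - c 0) * v N))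
                 + norm (c 0) * (norm (v (Suc N) - c 0) + norm (v N - c 0))"
      proof (rule add_mono)
        show "norm (c 0 * ((v (Suc N) - c 0) - (v N - c 0)))
              \<le> norm (c 0) * (norm (v (Suc N) - c 0) + norm (v N - c 0))"
          unfolding norm_mult by (intro mult_left_mono norm_triangle_ineq4) auto
      qed (rule norm_triangle_ineq4)
      finally show ?thesis by simp
    qed
    also have "\<dots> \<le> (K * Q ^ N) * B + (K * Q ^ N) * B + norm (c 0) * (K * Q ^ N + K * Q ^ N)"
    proof (intro add_mono mult_left_mono)
      show "norm ((u N - c 0) * v (Suc N)) \<le> K * Q ^ N * B"
        unfolding norm_mult using bu[of N] bvn[of "Suc N"]
        by (intro mult_mono) (auto simp: K0 Q0 less_imp_le)
      show "norm ((u (Suc N) - c 0) * v N) \<le> K * Q ^ N * B"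
        unfolding norm_mult using bu[of "Suc N"] bvn[of N] KQS
        by (intro mult_mono) (auto simp: K0 Q0 less_imp_le)
      show "norm (v (Suc N) - c 0) \<le> K * Q ^ N" using bv[of "Suc N"] KQS by linarith
      show "norm (v N - c 0) \<le> K * Q ^ N" by (rule bv)
    qed auto
    also have "\<dots> = C * Q ^ N" unfolding C_def by (simp add: algebra_simps)
    finally show ?thesis .
  qed
  have bE: "2 * \<bar>Im \<alpha>\<bar> * T N \<le> C * (w * Q) ^ N" for N
  proof -
    have "2 * \<bar>Im \<alpha>\<bar> * T N = w ^ N * norm (D N)"
      unfolding normE[symmetric] w'_def using w0 by (simp add: norm_mult norm_power)
    also have "\<dots> \<le> w ^ N * (C * Q ^ N)" using bD[of N] w0 by (intro mult_left_mono) auto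
    also have "\<dots> = C * (w * Q) ^ N" by (simp add: power_mult_distrib)
    finally show ?thesis .
  qed
  have "(\<lambda>n. K * Q ^ n) \<longlonglongrightarrow> K * 0"
    using Q0 Q1 by (intro tendsto_mult tendsto_const LIMSEQ_power_zero) auto
  hence "eventually (\<lambda>n. K * Q ^ n < norm (c 0)) sequentially"
    using c0nz by (intro order_tendstoD) auto
  then obtain m0 where m0: "\<And>n. n \<ge> m0 \<Longrightarrow> K * Q ^ n < norm (c 0)"
    by (auto simp: eventually_sequentially)
  define m where "m = m0"
  have m: "K * Q ^ Suc m < norm (c 0)" using m0[of "Suc m"] unfolding m_def by simp
  have um: "u (Suc m) \<noteq> 0"
  proof
    assume "u (Suc m) = 0"
    thus False using bu[of "Suc m"] m by simp
  qed
  define t where "t = Q ^ Suc m * w ^ m * norm (u (Suc m)) ^ 2"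
  have t0: "0 < t" unfolding t_def using Q0 w0 um by simp
  have Tt: "t \<le> T N" if "m < N" for N
    unfolding T_def t_def using that Q0 w0
    by (intro member_le_sum) auto
  have "(\<lambda>N. C * (w * Q) ^ N) \<longlonglongrightarrow> C * 0"
    using Q0 w0 wQ by (intro tendsto_mult tendsto_const LIMSEQ_power_zero) auto
  hence "eventually (\<lambda>N. C * (w * Q) ^ N < 2 * \<bar>Im \<alpha>\<bar> * t) sequentially"
    using im t0 by (intro order_tendstoD) auto
  then obtain N0 where N0: "\<And>N. N \<ge> N0 \<Longrightarrow> C * (w * Q) ^ N < 2 * \<bar>Im \<alpha>\<bar> * t"
    by (auto simp: eventually_sequentially)
  define N where "N = max N0 (Suc m)"
  have "2 * \<bar>Im \<alpha>\<bar> * t \<le> 2 * \<bar>Im \<alpha>\<bar> * T N"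
    using Tt[of N] unfolding N_def by (intro mult_left_mono) auto
  also have "\<dots> \<le> C * (w * Q) ^ N" by (rule bE)
  also have "\<dots> < 2 * \<bar>Im \<alpha>\<bar> * t" using N0[of N] unfolding N_def by simp
  finally show False by simp
qed

lemma f_neg:
  assumes "Im \<alpha> = 0" "Re \<alpha> < 0" shows "f \<alpha> \<noteq> 0"
proof -
  define a where "a = Re \<alpha>"
  have \<alpha>: "\<alpha> = of_real a" unfolding a_def using assms(1) by (simp add: complex_eq_iff)
  have pos: "c k * \<alpha> ^ k / c 0 \<in> \<real> \<and> 0 < Re (c k * \<alpha> ^ k / c 0)" for k
  proof (induction k)
    case 0 thus ?case using c0nz by simp
  next
    case (Suc k)
    then obtain r where r: "c k * \<alpha> ^ k / c 0 = of_real r" "0 < r"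
      by (metis Re_complex_of_real Reals_cases)
    have "c (Suc k) * \<alpha> ^ Suc k / c 0 = of_real (- (Q ^ Suc k / d k) * a) * (c k * \<alpha> ^ k / c 0)"
      unfolding c_Suc \<alpha> by (simp add: algebra_simps)
    also have "\<dots> = of_real (- (Q ^ Suc k / d k) * a * r)" unfolding r by simp
    finally have e: "c (Suc k) * \<alpha> ^ Suc k / c 0 = of_real (- (Q ^ Suc k / d k) * a * r)" .
    have p1: "0 < Q ^ Suc k / d k" using Q0 d_pos[of k] by simp
    have "0 < (Q ^ Suc k / d k) * (- a) * r"
      using p1 assms(2) r(2) unfolding a_def by (intro mult_pos_pos) auto
    hence "0 < - (Q ^ Suc k / d k) * a * r" by simp
    thus ?case unfolding e by simp
  qed
  define t where "t k = Re (c k * \<alpha> ^ k / c 0)" for k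
  have ct: "c k * \<alpha> ^ k = c 0 * of_real (t k)" for k
  proof -
    have "of_real (t k) = c k * \<alpha> ^ k / c 0" unfolding t_def using pos[of k]
      by (simp add: complex_is_Real_iff)
    thus ?thesis using c0nz by simp
  qed
  have "summable (\<lambda>k. c k * \<alpha> ^ k / c 0)" by (intro summable_divide summable_c)
  moreover have "(\<lambda>k. c k * \<alpha> ^ k / c 0) = (\<lambda>k. of_real (t k))"
    using ct c0nz by auto
  ultimately have st: "summable t" by simp
  have "f \<alpha> = (\<Sum>k. c 0 * of_real (t k))" unfolding f_def ct ..
  also have "\<dots> = c 0 * (\<Sum>k. of_real (t k))"
    by (rule suminf_mult) (use st in simp)
  also have "\<dots> = c 0 * of_real (suminf t)" by (simp only: suminf_of_real[OF st])
  finally have "f \<alpha> = c 0 * of_real (suminf t)" .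
  moreover have "0 < suminf t" using st pos unfolding t_def by (intro suminf_pos) auto
  ultimately show ?thesis using c0nz by simp
qed

lemma f_zero_pos:
  assumes "f \<alpha> = 0" "\<alpha> \<noteq> 0" shows "Im \<alpha> = 0 \<and> 0 < Re \<alpha>"
proof -
  have "Im \<alpha> = 0" using f_zero_real[OF assms(1)] .
  moreover have "Re \<alpha> \<noteq> 0" using assms(2) \<open>Im \<alpha> = 0\<close> by (simp add: complex_eq_iff)
  moreover have "\<not> Re \<alpha> < 0" using f_neg[OF \<open>Im \<alpha> = 0\<close>] assms(1) by blast
  ultimately show ?thesis by linarith
qed

end

theorem corollary3p2:
  fixes q \<nu> :: real and a :: complex
  assumes "0 < q" "q < 1" "\<nu> > -1"
    and "a \<noteq> 0" "hahn_exton_J q (of_real \<nu>) a = 0"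
  shows "a \<in> \<real>"
proof -
  note q0 = assms(1) and q1 = assms(2) and nu = assms(3)
  define Q where "Q = q ^ 2"
  define w where "w = q powr (2 * \<nu>)"
  define r where "r k = w * Q ^ Suc k" for k
  define Aq where "Aq k = qpoch_inf (of_real q powr (2 * complex_of_real \<nu> + 2 * of_nat k + 2)) (of_real (q\<^sup>2))" for k
  define P where "P k = qpoch (of_real (q\<^sup>2)) (of_real (q\<^sup>2)) k" for k
  define c where "c k = (-1) ^ k * complex_of_real (q ^ (k * (k + 1))) * Aq k / P k" for k
  have Q0: "0 < Q" and Q1: "Q < 1" unfolding Q_def using q0 q1 by (simp_all add: power_less_one_iff)
  have w0: "0 < w" unfolding w_def using q0 by simp
  have powr_k: "q powr (2 * \<nu> + 2 * real k + 2) = r k" for k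
  proof -
    have "q powr (2 * \<nu> + 2 * real k + 2) = q powr (2 * \<nu>) * q powr (real (2 * Suc k))"
      by (simp add: powr_add[symmetric] algebra_simps)
    also have "\<dots> = w * q ^ (2 * Suc k)" by (simp only: w_def powr_realpow[OF q0])
    also have "\<dots> = r k" unfolding r_def Q_def by (simp only: power_mult)
    finally show ?thesis .
  qed
  have wQ: "w * Q < 1"
  proof -
    have "w * Q = q powr (2 * \<nu> + 2 * real 0 + 2)" using powr_k[of 0] unfolding r_def by simp
    also have "\<dots> < 1 powr (2 * \<nu> + 2 * real 0 + 2)"
      using q0 q1 nu by (intro powr_less_mono2) auto
    finally show ?thesis by simp
  qed
  have r0: "0 < r k" for k unfolding r_def using w0 Q0 by simp
  have r1: "r k < 1" for k
  proof -
    have "Q ^ Suc k \<le> Q" using Q0 Q1 by (simp add: mult_left_le power_le_one)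
    hence "r k \<le> w * Q" unfolding r_def using w0 by simp
    thus ?thesis using wQ by simp
  qed
  have Aq_eq: "Aq k = qpoch_inf (of_real (r k)) (of_real Q)" for k
  proof -
    have "of_real q powr (2 * complex_of_real \<nu> + 2 * of_nat k + 2) = of_real q powr (of_real (2 * \<nu> + 2 * real k + 2))"
      by simp
    also have "\<dots> = of_real (r k)" using q0 by (simp only: powr_of_real powr_k less_imp_le)
    finally show ?thesis unfolding Aq_def Q_def by simp
  qed
  have Aq_shift: "Aq k = (1 - of_real (r k)) * Aq (Suc k)" for k
  proof -
    have "norm (complex_of_real (r k)) < 1" using r0[of k] r1[of k] by simp
    from qinf_shift[OF Q0 Q1 this] have "Aq k = (1 - of_real (r k)) * qpoch_inf (of_real (r k * Q)) (of_real Q)"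
      unfolding Aq_eq by simp
    moreover have "r k * Q = r (Suc k)" unfolding r_def by simp
    ultimately show ?thesis unfolding Aq_eq by simp
  qed
  have P_Suc: "P (Suc k) = P k * (1 - of_real (Q ^ Suc k))" for k
    unfolding P_def qpoch_def Q_def by simp
  have Pnz: "P k \<noteq> 0" for k
  proof -
    have "1 - complex_of_real Q * complex_of_real Q ^ i \<noteq> 0" for i
      using qinf_factor_nz[OF Q0 Q1, of "of_real Q" i] Q0 Q1 by simp
    thus ?thesis unfolding P_def qpoch_def Q_def by simp
  qed
  have rec: "c (Suc k) * (1 - of_real (Q ^ Suc k)) * (1 - of_real (w * Q ^ Suc k))
                 = - of_real (Q ^ Suc k) * c k" for k
  proof -
    define s where "s = Q ^ Suc k"
    define E where "E = q ^ (k * (k + 1))"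
    have qe: "q ^ (Suc k * (Suc k + 1)) = E * s"
    proof -
      have "Suc k * (Suc k + 1) = k * (k + 1) + 2 * Suc k" by simp
      thus ?thesis unfolding E_def s_def Q_def by (simp only: power_add power_mult)
    qed
    have s1: "1 - complex_of_real s \<noteq> 0"
    proof -
      have "Q ^ Suc k \<le> Q" using Q0 Q1 by (simp add: mult_left_le power_le_one)
      hence "s < 1" unfolding s_def using Q1 by linarith
      thus ?thesis by (metis eq_iff_diff_eq_0 of_real_eq_1_iff less_irrefl)
    qed
    have rs: "r k = w * s" unfolding r_def s_def ..
    show ?thesis
      unfolding c_def P_Suc Aq_shift[of k] qe s_def[symmetric] rs[symmetric] E_def[symmetric]
      using s1 Pnz[of k] by (simp add: field_simps)
  qed
  have c0: "c 0 = Aq 0" unfolding c_def P_def qpoch_def by simp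
  have c0R: "c 0 \<in> \<real>" unfolding c0 Aq_eq using qinf_real[OF Q0 Q1] by blast
  have c0nz: "c 0 \<noteq> 0" unfolding c0 Aq_eq using qinf_nz[OF Q0 Q1] r0[of 0] r1[of 0] by simp
  interpret qrec Q w c using Q0 Q1 w0 wQ c0R c0nz rec by unfold_locales auto
  have Pinf: "qpoch_inf (of_real (q\<^sup>2)) (of_real (q\<^sup>2)) \<noteq> 0"
  proof -
    have "norm (complex_of_real Q) < 1" using Q0 Q1 by simp
    from qinf_nz[OF Q0 Q1 this] show ?thesis unfolding Q_def .
  qed
  have "hahn_exton_J q (of_real \<nu>) a = a powr (of_real \<nu>) / qpoch_inf (of_real (q\<^sup>2)) (of_real (q\<^sup>2)) * f (a ^ 2)"
    unfolding hahn_exton_J_def f_def c_def Aq_def P_def by (simp add: power_mult)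
  hence fa: "f (a ^ 2) = 0" using assms(4,5) Pinf by simp
  have "a ^ 2 \<noteq> 0" using assms(4) by simp
  from f_zero_pos[OF fa this] have "Im (a ^ 2) = 0" "0 < Re (a ^ 2)" by auto
  hence h: "Im a = 0 \<or> Re a = 0" "Im a * Im a < Re a * Re a" by (auto simp: power2_eq_square)
  have "Im a = 0"
  proof (cases "Re a = 0")
    case True thus ?thesis using h(2) by (simp add: not_square_less_zero)
  next
    case False thus ?thesis using h(1) by simp
  qed
  thus ?thesis by (simp add: complex_is_Real_iff)
qed

end
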